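(* Let $p(0)\in\mathcal M_1^+$ be such that all coefficients $a(p(0))_k$, $k\in\mathbb N_0$, are finite, let $p(t+1)=\mathcal R_1(p(t))$ for $t\in\mathbb N_0$, and put $a_k(t)=a(p(t))_k$ and $\alpha=a_1(0)$. Then $\lim_{t\to\infty}a_k(t)=\alpha^k$ for all $k\ge0$.
   Context: $\mathcal M_1^+$ is the set of probability measures on $\mathbb N_0$, identified with nonnegative sequences summing to $1$. $\mathcal R_1(p)_i=\sum_{k,\ell\ge0,\ k+\ell\ge i}\frac{1+\min\{k,\ell,i,k+\ell-i\}}{(k+1)(\ell+1)}p_kp_\ell$. For $p\in\mathcal M_1^+$, $a(p)_k=\frac{1}{k+1}\sum_{\ell\ge k}\binom{\ell}{k}p_\ell\in[0,\infty]$ (so $a(p)_0=1$ and $a(p)_1=\frac12\sum_\ell \ell p_\ell$). *)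

theory Defs
  imports "HOL-Analysis.Analysis"
begin

definition M1plus :: "(nat \<Rightarrow> real) set" where
  "M1plus = {p. (\<forall>k. 0 \<le> p k) \<and> p sums 1}"

definition R1 :: "(nat \<Rightarrow> real) \<Rightarrow> nat \<Rightarrow> real" where
  "R1 p i = (\<Sum>\<^sub>\<infinity>(k, l)\<in>{(k, l). i \<le> k + l}.
      (1 + real (min (min k l) (min i (k + l - i)))) / (real (k + 1) * real (l + 1)) * p k * p l)"

definition acoef :: "(nat \<Rightarrow> real) \<Rightarrow> nat \<Rightarrow> ennreal" where
  "acoef p k = ennreal (1 / (real k + 1)) *
      (\<Sum>\<^sub>\<infinity>l\<in>{k..}. ennreal (real (l choose k) * p l))"

end

theory Submission
  imports Defs
begin

lemma t3_low:
  fixes y :: "'a::{linorder_topology, dense_linorder}"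
  assumes "open W" "y \<in> W"
  shows "\<exists>U V. open U \<and> open V \<and> y \<in> U \<and> U \<inter> V = {} \<and> {..<y} - W \<subseteq> V"
proof (cases "\<exists>z. z < y")
  case True
  then obtain z where "z < y" by blast
  from open_left[OF assms this] obtain a where a: "a < y" "{a<..y} \<subseteq> W" by blast
  then obtain a' where "a < a'" "a' < y" using dense by blast
  then show ?thesis using a
  proof -
    have "{..<y} - W \<subseteq> {..<a'}"
    proof
      fix x assume x: "x \<in> {..<y} - W"
      show "x \<in> {..<a'}"
      proof (rule ccontr)
        assume "x \<notin> {..<a'}"
        then have "a < x" using \<open>a < a'\<close> by (simp add: not_less)
        then show False using x a(2) by (auto simp: subset_eq)
      qed
    qed
    then show ?thesis using \<open>a' < y\<close> by (intro exI[of _ "{a'<..}"] exI[of _ "{..<a'}"]) auto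
  qed
next
  case False
  then show ?thesis by (intro exI[of _ UNIV] exI[of _ "{}"]) auto
qed

lemma t3_high:
  fixes y :: "'a::{linorder_topology, dense_linorder}"
  assumes "open W" "y \<in> W"
  shows "\<exists>U V. open U \<and> open V \<and> y \<in> U \<and> U \<inter> V = {} \<and> {y<..} - W \<subseteq> V"
proof (cases "\<exists>z. y < z")
  case True
  then obtain z where "y < z" by blast
  from open_right[OF assms this] obtain a where a: "y < a" "{y..<a} \<subseteq> W" by blast
  then obtain a' where "y < a'" "a' < a" using dense by blast
  then show ?thesis using a
  proof -
    have "{y<..} - W \<subseteq> {a'<..}"
    proof
      fix x assume x: "x \<in> {y<..} - W"
      show "x \<in> {a'<..}"
      proof (rule ccontr)
        assume "x \<notin> {a'<..}"
        then have "x < a" using \<open>a' < a\<close> by (simp add: not_less)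
        then show False using x a(2) by (auto simp: subset_eq)
      qed
    qed
    then show ?thesis using \<open>y < a'\<close> by (intro exI[of _ "{..<a'}"] exI[of _ "{a'<..}"]) auto
  qed
next
  case False
  then show ?thesis by (intro exI[of _ UNIV] exI[of _ "{}"]) auto
qed

instance ennreal :: t3_space
proof
  fix S and y :: ennreal assume S: "closed S" "y \<notin> S"
  then have W: "open (-S)" "y \<in> -S" by auto
  obtain U1 V1 where 1: "open U1" "open V1" "y \<in> U1" "U1 \<inter> V1 = {}" "{..<y} - (-S) \<subseteq> V1"
    using t3_low[OF W] by blast
  obtain U2 V2 where 2: "open U2" "open V2" "y \<in> U2" "U2 \<inter> V2 = {}" "{y<..} - (-S) \<subseteq> V2"
    using t3_high[OF W] by blast
  have "S \<subseteq> V1 \<union> V2"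
  proof (rule subsetI)
    fix s assume "s \<in> S"
    then have "s < y \<or> y < s" using S(2) by (metis linorder_neqE)
    then show "s \<in> V1 \<union> V2" using 1(5) 2(5) \<open>s \<in> S\<close> by auto
  qed
  moreover have "(U1 \<inter> U2) \<inter> (V1 \<union> V2) = {}" using 1(4) 2(4) by blast
  ultimately show "\<exists>U V. open U \<and> open V \<and> y \<in> U \<and> S \<subseteq> V \<and> U \<inter> V = {}"
    using 1 2 by (meson IntI open_Int open_Un)
qed

lemma enn_summable[simp]: "(f::'a\<Rightarrow>ennreal) summable_on A"
  by (rule nonneg_summable_on_complete) simp

lemma enn_infsum_SUP: "infsum (f::'a\<Rightarrow>ennreal) A = (SUP F\<in>{F. finite F \<and> F\<subseteq>A}. sum f F)"
  by (rule nonneg_infsum_complete) simp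

lemma enn_infsum_cmult: "infsum (\<lambda>x. c * (f::'a\<Rightarrow>ennreal) x) A = c * infsum f A"
  by (simp add: enn_infsum_SUP SUP_mult_left_ennreal sum_distrib_left)

lemma enn_infsum_cmult_right: "infsum (\<lambda>x. (f::'a\<Rightarrow>ennreal) x * c) A = infsum f A * c"
  using enn_infsum_cmult[of c f A] by (simp add: mult.commute)

lemma enn_infsum_Sigma: "infsum (f::'a\<times>'b\<Rightarrow>ennreal) (Sigma A B) = infsum (\<lambda>x. infsum (\<lambda>y. f (x,y)) (B x)) A"
proof -
  have "((\<lambda>x. infsum (\<lambda>y. f (x,y)) (B x)) has_sum infsum f (Sigma A B)) A"
    by (rule has_sum_SigmaD[where f=f and B=B]) (simp_all add: has_sum_infsum)
  thus ?thesis by (simp add: infsumI)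
qed

lemma enn_infsum_swap: "infsum (\<lambda>x. infsum (\<lambda>y. (f::'a\<Rightarrow>'b\<Rightarrow>ennreal) x y) B) A = infsum (\<lambda>y. infsum (\<lambda>x. f x y) A) B"
proof -
  have "infsum (\<lambda>x. infsum (\<lambda>y. f x y) B) A = infsum (\<lambda>(x,y). f x y) (A \<times> B)"
    using enn_infsum_Sigma[of "\<lambda>(x,y). f x y" A "\<lambda>_. B"] by simp
  also have "\<dots> = infsum (\<lambda>(y,x). f x y) (B \<times> A)"
    using has_sum_swap[where f="\<lambda>(x,y). f x y" and S="infsum (\<lambda>(x,y). f x y) (A \<times> B)" and A=A and B=B]
    by (simp add: infsumI)
  also have "\<dots> = infsum (\<lambda>y. infsum (\<lambda>x. f x y) A) B"
    using enn_infsum_Sigma[of "\<lambda>(y,x). f x y" B "\<lambda>_. A"] by simp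
  finally show ?thesis .
qed

lemma enn_infsum_sum: "finite J \<Longrightarrow> infsum (\<lambda>x. \<Sum>j\<in>J. (f::'b\<Rightarrow>'a\<Rightarrow>ennreal) j x) A = (\<Sum>j\<in>J. infsum (f j) A)"
proof (induction J rule: finite_induct)
  case empty then show ?case by simp
next
  case (insert j J)
  then show ?case by (simp add: infsum_add)
qed

lemma enn_infsum_prod: "infsum (\<lambda>(x,y). (f::'a\<Rightarrow>ennreal) x * g y) (A \<times> B) = infsum f A * infsum g B"
proof -
  have "infsum (\<lambda>(x,y). f x * g y) (A \<times> B) = infsum (\<lambda>x. infsum (\<lambda>y. f x * g y) B) A"
    using enn_infsum_Sigma[of "\<lambda>(x,y). f x * g y" A "\<lambda>_. B"] by simp
  also have "\<dots> = infsum (\<lambda>x. f x * infsum g B) A" by (simp add: enn_infsum_cmult)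
  finally show ?thesis by (simp add: enn_infsum_cmult_right)
qed

lemma real_to_enn_infsum:
  fixes g :: "'a \<Rightarrow> real"
  assumes nn: "\<And>x. x \<in> A \<Longrightarrow> g x \<ge> 0" and fin: "infsum (\<lambda>x. ennreal (g x)) A < \<infinity>"
  shows "g summable_on A" "ennreal (infsum g A) = infsum (\<lambda>x. ennreal (g x)) A"
proof -
  have le: "ennreal (sum g F) \<le> infsum (\<lambda>x. ennreal (g x)) A" if "finite F" "F \<subseteq> A" for F
  proof -
    have "ennreal (sum g F) = sum (\<lambda>x. ennreal (g x)) F"
      using that nn by (subst sum_ennreal[symmetric]) (auto intro!: sum.cong)
    also have "\<dots> \<le> infsum (\<lambda>x. ennreal (g x)) A"
      unfolding enn_infsum_SUP using that by (intro SUP_upper) auto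
    finally show ?thesis .
  qed
  show sg: "g summable_on A"
  proof (rule nonneg_bdd_above_summable_on)
    show "bdd_above (sum g ` {F. F \<subseteq> A \<and> finite F})"
      unfolding bdd_above_def
    proof (intro exI[of _ "enn2real (infsum (\<lambda>x. ennreal (g x)) A)"] ballI)
      fix y assume "y \<in> sum g ` {F. F \<subseteq> A \<and> finite F}"
      then obtain F where F: "F \<subseteq> A" "finite F" "y = sum g F" by auto
      have "0 \<le> y" using F nn by (auto intro!: sum_nonneg)
      then show "y \<le> enn2real (infsum (\<lambda>x. ennreal (g x)) A)"
        using le[OF F(2,1)] fin F(3)
        by (metis enn2real_ennreal enn2real_mono infinity_ennreal_def)
    qed
  qed (use nn in auto)
  have "ennreal (infsum g A) = infsum (ennreal \<circ> g) A"
  proof (rule sym, rule infsum_comm_additive_general[OF _ _ sg])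
    fix F assume "finite F" "F \<subseteq> A"
    then show "sum (ennreal \<circ> g) F = ennreal (sum g F)"
      using nn by (subst sum_ennreal[symmetric]) (auto intro!: sum.cong)
  next
    show "isCont ennreal (infsum g A)" unfolding isCont_def
      by (rule tendsto_ennrealI) (rule tendsto_ident_at)
  qed
  then show "ennreal (infsum g A) = infsum (\<lambda>x. ennreal (g x)) A" by (simp add: o_def)
qed

lemma card_fiber:
  assumes "i \<le> k + l"
  shows "card ({..k} \<inter> {x. x \<le> i \<and> i \<le> x + l}) = 1 + min (min k l) (min i (k + l - i))"
proof -
  have "{..k} \<inter> {x. x \<le> i \<and> i \<le> x + l} = {i - l..min k i}" by auto
  moreover have "Suc (min k i) - (i - l) = 1 + min (min k l) (min i (k + l - i))"
    using assms by (cases "i \<le> l"; cases "k \<le> i"; cases "k \<le> l"; simp add: min_def; arith)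
  ultimately show ?thesis by simp
qed

lemma sum_grid:
  fixes f :: "nat \<Rightarrow> 'a::comm_semiring_1"
  shows "(\<Sum>x\<le>k. \<Sum>y\<le>l. f (x + y)) = (\<Sum>i\<le>k+l. f i * of_nat (1 + min (min k l) (min i (k + l - i))))"
proof -
  have inner: "(\<Sum>y\<le>l. f (x + y)) = (\<Sum>i\<le>k+l. if x \<le> i \<and> i \<le> x + l then f i else 0)" if "x \<le> k" for x
  proof -
    have "(\<Sum>y\<le>l. f (x + y)) = (\<Sum>i\<in>{x..x+l}. f i)"
      by (rule sum.reindex_bij_witness[where i="\<lambda>i. i - x" and j="\<lambda>y. x + y"]) auto
    also have "\<dots> = (\<Sum>i\<in>{..k+l} \<inter> {i. x \<le> i \<and> i \<le> x + l}. f i)"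
      using that by (intro sum.cong) auto
    also have "\<dots> = (\<Sum>i\<le>k+l. if x \<le> i \<and> i \<le> x + l then f i else 0)"
      by (simp add: sum.inter_restrict)
    finally show ?thesis .
  qed
  have "(\<Sum>x\<le>k. \<Sum>y\<le>l. f (x + y)) = (\<Sum>x\<le>k. \<Sum>i\<le>k+l. if x \<le> i \<and> i \<le> x + l then f i else 0)"
    by (rule sum.cong[OF refl]) (simp add: inner)
  also have "\<dots> = (\<Sum>i\<le>k+l. \<Sum>x\<le>k. if x \<le> i \<and> i \<le> x + l then f i else 0)"
    by (rule sum.swap)
  also have "\<dots> = (\<Sum>i\<le>k+l. f i * of_nat (1 + min (min k l) (min i (k + l - i))))"
  proof (intro sum.cong refl)
    fix i assume "i \<in> {..k+l}"
    then have "(\<Sum>x\<le>k. if x \<le> i \<and> i \<le> x + l then f i else 0) = of_nat (card ({..k} \<inter> {x. x \<le> i \<and> i \<le> x + l})) * f i"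
      by (simp add: sum.If_cases)
    then show "(\<Sum>x\<le>k. if x \<le> i \<and> i \<le> x + l then f i else 0) = f i * of_nat (1 + min (min k l) (min i (k + l - i)))"
      using card_fiber[of i k l] \<open>i \<in> {..k+l}\<close> by (simp add: mult.commute)
  qed
  finally show ?thesis .
qed

lemma CI_nat:
  "(\<Sum>i\<le>k+l. (i choose m) * (1 + min (min k l) (min i (k + l - i)))) =
   (\<Sum>j\<le>m. (Suc k choose Suc j) * (Suc l choose Suc (m - j)))"
proof -
  have "(\<Sum>i\<le>k+l. (i choose m) * (1 + min (min k l) (min i (k + l - i)))) = (\<Sum>x\<le>k. \<Sum>y\<le>l. (x + y) choose m)"
    using sum_grid[where f="\<lambda>i. i choose m" and k=k and l=l] by simp
  also have "\<dots> = (\<Sum>x\<le>k. \<Sum>y\<le>l. \<Sum>j\<le>m. (x choose j) * (y choose (m - j)))"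
    by (simp add: vandermonde)
  also have "\<dots> = (\<Sum>j\<le>m. (\<Sum>x\<le>k. x choose j) * (\<Sum>y\<le>l. y choose (m - j)))"
  proof -
    have "(\<Sum>x\<le>k. \<Sum>y\<le>l. \<Sum>j\<le>m. (x choose j) * (y choose (m - j))) = (\<Sum>x\<le>k. \<Sum>j\<le>m. \<Sum>y\<le>l. (x choose j) * (y choose (m - j)))"
      by (rule sum.cong[OF refl], rule sum.swap)
    also have "\<dots> = (\<Sum>j\<le>m. \<Sum>x\<le>k. \<Sum>y\<le>l. (x choose j) * (y choose (m - j)))"
      by (rule sum.swap)
    also have "\<dots> = (\<Sum>j\<le>m. (\<Sum>x\<le>k. x choose j) * (\<Sum>y\<le>l. y choose (m - j)))"
      by (simp add: sum_product)
    finally show ?thesis .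
  qed
  also have "\<dots> = (\<Sum>j\<le>m. (Suc k choose Suc j) * (Suc l choose Suc (m - j)))"
    by (simp add: sum_choose_upper)
  finally show ?thesis .
qed

definition Wt :: "nat \<Rightarrow> nat \<Rightarrow> nat \<Rightarrow> real" where
  "Wt i k l = (if i \<le> k + l then (1 + real (min (min k l) (min i (k + l - i)))) / (real (k + 1) * real (l + 1)) else 0)"

definition bb :: "nat \<Rightarrow> nat \<Rightarrow> real" where
  "bb j k = real (k choose j) / real (j + 1)"

lemma bb_nonneg: "bb j k \<ge> 0" by (simp add: bb_def)

lemma Wt_nonneg: "Wt i k l \<ge> 0" by (simp add: Wt_def)

lemma Wt_le1: "Wt i k l \<le> 1"
proof -
  have "1 + real (min (min k l) (min i (k + l - i))) \<le> real (k + 1) * real (l + 1)"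
  proof -
    have "1 + real (min (min k l) (min i (k + l - i))) \<le> real (k + 1)" by simp
    also have "\<dots> \<le> real (k + 1) * real (l + 1)" by simp
    finally show ?thesis .
  qed
  then show ?thesis by (simp add: Wt_def)
qed

lemma choose_div: "real (Suc k choose Suc j) / real (Suc k) = bb j k"
proof -
  have "real (Suc k) * real (k choose j) = real (Suc k choose Suc j) * real (Suc j)"
    using Suc_times_binomial_eq[of k j] by (metis of_nat_mult)
  then show ?thesis unfolding bb_def by (simp add: field_simps)
qed

lemma CI_real:
  "(\<Sum>i\<le>k+l. real (i choose m) * Wt i k l) = (\<Sum>j\<le>m. bb j k * bb (m - j) l)"
proof -
  have "(\<Sum>i\<le>k+l. real (i choose m) * Wt i k l) =
      (\<Sum>i\<le>k+l. real ((i choose m) * (1 + min (min k l) (min i (k + l - i))))) / (real (k + 1) * real (l + 1))"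
    by (simp add: Wt_def sum_divide_distrib distrib_left)
  also have "\<dots> = real (\<Sum>j\<le>m. (Suc k choose Suc j) * (Suc l choose Suc (m - j))) / (real (k + 1) * real (l + 1))"
    by (simp only: of_nat_sum[symmetric] CI_nat)
  also have "\<dots> = (\<Sum>j\<le>m. (real (Suc k choose Suc j) / real (Suc k)) * (real (Suc l choose Suc (m - j)) / real (Suc l)))"
    by (simp add: sum_divide_distrib)
  also have "\<dots> = (\<Sum>j\<le>m. bb j k * bb (m - j) l)"
    by (simp only: choose_div)
  finally show ?thesis .
qed

lemma acoef_alt:
  assumes nn: "\<And>k. p k \<ge> 0"
  shows "acoef p j = (\<Sum>\<^sub>\<infinity>k. ennreal (bb j k * p k))"
proof -
  have "acoef p j = (\<Sum>\<^sub>\<infinity>k\<in>{j..}. ennreal (1 / (real j + 1)) * ennreal (real (k choose j) * p k))"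
    unfolding acoef_def by (simp add: enn_infsum_cmult)
  also have "\<dots> = (\<Sum>\<^sub>\<infinity>k\<in>{j..}. ennreal (bb j k * p k))"
    using nn by (intro infsum_cong) (simp add: bb_def ennreal_mult[symmetric] field_simps)
  also have "\<dots> = (\<Sum>\<^sub>\<infinity>k. ennreal (bb j k * p k))"
    by (intro infsum_cong_neutral) (auto simp: bb_def not_le binomial_eq_0)
  finally show ?thesis .
qed

lemma acoef0: "acoef p 0 = (\<Sum>\<^sub>\<infinity>k. ennreal (p k))"
  unfolding acoef_def by simp

lemma R1_nonneg:
  assumes nn: "\<And>k. p k \<ge> 0"
  shows "R1 p i \<ge> 0"
  unfolding R1_def using nn by (intro infsum_nonneg) auto

lemma R1_enn:
  assumes nn: "\<And>k. p k \<ge> 0" and fin: "acoef p 0 < \<infinity>"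
  shows "ennreal (R1 p i) = (\<Sum>\<^sub>\<infinity>(k,l). ennreal (Wt i k l * p k * p l))"
proof -
  define g where "g = (\<lambda>(k,l). (1 + real (min (min k l) (min i (k + l - i)))) / (real (k + 1) * real (l + 1)) * p k * p l)"
  define S where "S = {(k, l). i \<le> k + l}"
  have gnn: "g x \<ge> 0" for x using nn by (auto simp: g_def case_prod_beta)
  have gW: "g (k,l) = (if (k,l) \<in> S then Wt i k l * p k * p l else 0) \<or> (k,l) \<notin> S" for k l
    by (auto simp: g_def S_def Wt_def)
  have "(\<Sum>\<^sub>\<infinity>x\<in>S. ennreal (g x)) \<le> (\<Sum>\<^sub>\<infinity>(k,l). ennreal (p k) * ennreal (p l))"
  proof (rule infsum_mono_neutral)
    fix x assume "x \<in> S \<inter> UNIV"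
    obtain k l where x: "x = (k,l)" by fastforce
    have "g x = Wt i k l * p k * p l" using \<open>x \<in> S \<inter> UNIV\<close> by (simp add: x g_def S_def Wt_def)
    also have "\<dots> \<le> 1 * p k * p l" using Wt_le1[of i k l] nn
      by (intro mult_right_mono) auto
    finally show "ennreal (g x) \<le> (case x of (k, l) \<Rightarrow> ennreal (p k) * ennreal (p l))"
      by (simp add: x ennreal_mult[symmetric] nn)
  qed auto
  also have "\<dots> = acoef p 0 * acoef p 0"
    using enn_infsum_prod[of "\<lambda>k. ennreal (p k)" "\<lambda>k. ennreal (p k)" UNIV UNIV] by (simp add: acoef0)
  also have "\<dots> < \<infinity>" using fin by (simp add: ennreal_mult_less_top)
  finally have fin2: "(\<Sum>\<^sub>\<infinity>x\<in>S. ennreal (g x)) < \<infinity>" .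
  have "ennreal (R1 p i) = ennreal (infsum g S)"
    unfolding R1_def g_def S_def by simp
  also have "\<dots> = (\<Sum>\<^sub>\<infinity>x\<in>S. ennreal (g x))"
    using real_to_enn_infsum(2)[of S g] gnn fin2 by simp
  also have "\<dots> = (\<Sum>\<^sub>\<infinity>(k,l). ennreal (Wt i k l * p k * p l))"
    by (intro infsum_cong_neutral) (auto simp: S_def g_def Wt_def)
  finally show ?thesis .
qed

lemma acoef_R1:
  assumes nn: "\<And>k. p k \<ge> 0" and fin: "acoef p 0 < \<infinity>"
  shows "acoef (R1 p) m = ennreal (1 / (real m + 1)) * (\<Sum>j\<le>m. acoef p j * acoef p (m - j))"
proof -
  have Rnn: "\<And>i. R1 p i \<ge> 0" using R1_nonneg nn by blast
  have "(\<Sum>\<^sub>\<infinity>i\<in>{m..}. ennreal (real (i choose m) * R1 p i)) = (\<Sum>\<^sub>\<infinity>i. ennreal (real (i choose m)) * ennreal (R1 p i))"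
    by (intro infsum_cong_neutral) (auto simp: not_le binomial_eq_0 ennreal_mult Rnn)
  also have "\<dots> = (\<Sum>\<^sub>\<infinity>i. \<Sum>\<^sub>\<infinity>(k,l). ennreal (real (i choose m)) * ennreal (Wt i k l * p k * p l))"
  proof (intro infsum_cong)
    fix i
    have "ennreal (real (i choose m)) * (\<Sum>\<^sub>\<infinity>(k,l). ennreal (Wt i k l * p k * p l)) = (\<Sum>\<^sub>\<infinity>x. ennreal (real (i choose m)) * (case x of (k,l) \<Rightarrow> ennreal (Wt i k l * p k * p l)))"
      by (rule enn_infsum_cmult[symmetric])
    then show "ennreal (real (i choose m)) * ennreal (R1 p i) = (\<Sum>\<^sub>\<infinity>(k,l). ennreal (real (i choose m)) * ennreal (Wt i k l * p k * p l))"
      by (simp add: R1_enn[OF nn fin] split_def)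
  qed
  also have "\<dots> = (\<Sum>\<^sub>\<infinity>(k,l). \<Sum>\<^sub>\<infinity>i. ennreal (real (i choose m)) * ennreal (Wt i k l * p k * p l))"
    using enn_infsum_swap[of "\<lambda>i (k,l). ennreal (real (i choose m)) * ennreal (Wt i k l * p k * p l)" UNIV UNIV]
    by (simp add: split_def)
  also have "\<dots> = (\<Sum>\<^sub>\<infinity>(k,l). \<Sum>j\<le>m. ennreal (bb j k * p k) * ennreal (bb (m - j) l * p l))"
  proof (intro infsum_cong, clarify)
    fix k l
    have "(\<Sum>\<^sub>\<infinity>i. ennreal (real (i choose m)) * ennreal (Wt i k l * p k * p l)) =
          (\<Sum>\<^sub>\<infinity>i\<in>{..k+l}. ennreal (real (i choose m) * Wt i k l * p k * p l))"
      using nn by (intro infsum_cong_neutral) (auto simp: Wt_def ennreal_mult[symmetric] Wt_nonneg mult.assoc)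
    also have "\<dots> = ennreal (\<Sum>i\<le>k+l. real (i choose m) * Wt i k l * p k * p l)"
      using nn Wt_nonneg by (simp add: sum_ennreal)
    also have "(\<Sum>i\<le>k+l. real (i choose m) * Wt i k l * p k * p l) = (\<Sum>i\<le>k+l. real (i choose m) * Wt i k l) * (p k * p l)"
      by (simp add: sum_distrib_right mult.assoc)
    also have "\<dots> = (\<Sum>j\<le>m. (bb j k * p k) * (bb (m - j) l * p l))"
      unfolding CI_real sum_distrib_right by (simp add: mult_ac)
    also have "ennreal \<dots> = (\<Sum>j\<le>m. ennreal (bb j k * p k) * ennreal (bb (m - j) l * p l))"
      using nn by (subst sum_ennreal[symmetric]) (auto simp: bb_nonneg ennreal_mult intro!: sum.cong)
    finally show "(\<Sum>\<^sub>\<infinity>i. ennreal (real (i choose m)) * ennreal (Wt i k l * p k * p l)) =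
          (\<Sum>j\<le>m. ennreal (bb j k * p k) * ennreal (bb (m - j) l * p l))" .
  qed
  also have "\<dots> = (\<Sum>j\<le>m. \<Sum>\<^sub>\<infinity>(k,l). ennreal (bb j k * p k) * ennreal (bb (m - j) l * p l))"
    using enn_infsum_sum[of "{..m}" "\<lambda>j (k,l). ennreal (bb j k * p k) * ennreal (bb (m - j) l * p l)" UNIV]
    by (simp add: split_def)
  also have "\<dots> = (\<Sum>j\<le>m. acoef p j * acoef p (m - j))"
  proof (intro sum.cong refl)
    fix j
    show "(\<Sum>\<^sub>\<infinity>(k,l). ennreal (bb j k * p k) * ennreal (bb (m - j) l * p l)) = acoef p j * acoef p (m - j)"
      using enn_infsum_prod[of "\<lambda>k. ennreal (bb j k * p k)" "\<lambda>l. ennreal (bb (m - j) l * p l)" UNIV UNIV]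
      by (simp add: acoef_alt[OF nn])
  qed
  finally show ?thesis unfolding acoef_def by simp
qed

lemma contraction_limit:
  fixes x c :: "nat \<Rightarrow> real"
  assumes r: "0 \<le> r" "r < 1" and c: "c \<longlonglongrightarrow> L"
    and rec: "\<And>t. x (Suc t) = r * x t + c t"
  shows "x \<longlonglongrightarrow> L / (1 - r)"
proof -
  define M where "M = L / (1 - r)"
  define y where "y t = x t - M" for t
  define e where "e t = c t - L" for t
  have yrec: "y (Suc t) = r * y t + e t" for t
    unfolding y_def e_def M_def using rec[of t] r by (simp add: field_simps)
  have e0: "e \<longlonglongrightarrow> 0" unfolding e_def using c by (simp add: LIM_zero)
  have "y \<longlonglongrightarrow> 0"
  proof (rule LIMSEQ_I)
    fix \<epsilon> :: real assume "\<epsilon> > 0"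
    then have "\<epsilon> * (1 - r) / 2 > 0" using r by simp
    from LIMSEQ_D[OF e0 this] obtain N0 where N0: "\<And>n. n \<ge> N0 \<Longrightarrow> norm (e n) < \<epsilon> * (1 - r) / 2" by auto
    have bound: "\<bar>y (N0 + n)\<bar> \<le> r ^ n * \<bar>y N0\<bar> + \<epsilon> / 2" for n
    proof (induction n)
      case 0 then show ?case using \<open>\<epsilon> > 0\<close> by simp
    next
      case (Suc n)
      have "\<bar>y (N0 + Suc n)\<bar> = \<bar>r * y (N0 + n) + e (N0 + n)\<bar>" by (simp add: yrec)
      also have "\<dots> \<le> r * \<bar>y (N0 + n)\<bar> + \<bar>e (N0 + n)\<bar>"
        using abs_triangle_ineq[of "r * y (N0 + n)" "e (N0 + n)"] r by (simp add: abs_mult)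
      also have "\<dots> \<le> r * (r ^ n * \<bar>y N0\<bar> + \<epsilon> / 2) + \<epsilon> * (1 - r) / 2"
      proof -
        have h1: "r * \<bar>y (N0 + n)\<bar> \<le> r * (r ^ n * \<bar>y N0\<bar> + \<epsilon> / 2)"
          using Suc.IH r(1) by (rule mult_left_mono)
        have h2: "\<bar>e (N0 + n)\<bar> \<le> \<epsilon> * (1 - r) / 2" using N0[of "N0 + n"] by simp
        show ?thesis using h1 h2 by linarith
      qed
      also have "\<dots> = r ^ Suc n * \<bar>y N0\<bar> + \<epsilon> / 2" by (simp add: algebra_simps add_divide_distrib diff_divide_distrib)
      finally show ?case .
    qed
    have "(\<lambda>n. r ^ n * \<bar>y N0\<bar>) \<longlonglongrightarrow> 0 * \<bar>y N0\<bar>"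
      using r by (intro tendsto_mult LIMSEQ_power_zero tendsto_const) auto
    then have "(\<lambda>n. r ^ n * \<bar>y N0\<bar>) \<longlonglongrightarrow> 0" by simp
    from LIMSEQ_D[OF this, of "\<epsilon> / 2"] \<open>\<epsilon> > 0\<close> obtain N1 where N1: "\<And>n. n \<ge> N1 \<Longrightarrow> norm (r ^ n * \<bar>y N0\<bar>) < \<epsilon> / 2" by auto
    show "\<exists>N. \<forall>n\<ge>N. norm (y n - 0) < \<epsilon>"
    proof (intro exI allI impI)
      fix n assume "n \<ge> N0 + N1"
      define d where "d = n - N0"
      have d: "n = N0 + d" "d \<ge> N1" using \<open>n \<ge> N0 + N1\<close> by (auto simp: d_def)
      have "\<bar>y n\<bar> \<le> r ^ d * \<bar>y N0\<bar> + \<epsilon> / 2" using bound d by simp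
      also have "\<dots> < \<epsilon>" using N1[OF d(2)] r by simp
      finally show "norm (y n - 0) < \<epsilon>" by simp
    qed
  qed
  then have "(\<lambda>t. y t + M) \<longlonglongrightarrow> 0 + M" by (intro tendsto_add tendsto_const)
  then show ?thesis unfolding y_def M_def by simp
qed

lemma sum_split_ends:
  fixes f :: "nat \<Rightarrow> 'a::comm_monoid_add"
  assumes "k \<ge> 1"
  shows "(\<Sum>j\<le>k. f j) = f 0 + f k + (\<Sum>j\<in>{1..<k}. f j)"
proof -
  have "{..k} = insert 0 (insert k {1..<k})" using assms by auto
  then show ?thesis using assms by (simp add: add.assoc)
qed

lemma limit_rec:
  fixes a :: "nat \<Rightarrow> nat \<Rightarrow> real"
  assumes rec: "\<And>t m. a (Suc t) m = 1 / (real m + 1) * (\<Sum>j\<le>m. a t j * a t (m - j))"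
    and a0: "\<And>t. a t 0 = 1" and a1: "\<And>t. a t 1 = \<alpha>"
  shows "(\<lambda>t. a t k) \<longlonglongrightarrow> \<alpha> ^ k"
proof (induction k rule: less_induct)
  case (less k)
  show ?case
  proof (cases "k \<le> 1")
    case True
    then have "k = 0 \<or> k = 1" by auto
    then show ?thesis using a0 a1 by auto
  next
    case False
    then have k2: "k \<ge> 2" by simp
    define c where "c t = 1 / (real k + 1) * (\<Sum>j\<in>{1..<k}. a t j * a t (k - j))" for t
    define r where "r = 2 / (real k + 1)"
    have recx: "a (Suc t) k = r * a t k + c t" for t
    proof -
      have "a (Suc t) k = 1 / (real k + 1) * (a t 0 * a t k + a t k * a t 0 + (\<Sum>j\<in>{1..<k}. a t j * a t (k - j)))"
        using rec[of t k] sum_split_ends[of k "\<lambda>j. a t j * a t (k - j)"] k2 by simp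
      then show ?thesis unfolding r_def c_def using a0[of t] by (simp add: algebra_simps add_divide_distrib)
    qed
    have "c \<longlonglongrightarrow> 1 / (real k + 1) * (\<Sum>j\<in>{1..<k}. \<alpha> ^ j * \<alpha> ^ (k - j))"
      unfolding c_def
      by (intro tendsto_mult tendsto_const tendsto_sum; rule less.IH) auto
    also have "(\<Sum>j\<in>{1..<k}. \<alpha> ^ j * \<alpha> ^ (k - j)) = (\<Sum>j\<in>{1..<k}. \<alpha> ^ k)"
      by (intro sum.cong refl) (auto simp: power_add[symmetric])
    also have "\<dots> = (real k - 1) * \<alpha> ^ k" using k2 by (simp add: of_nat_diff)
    finally have cl: "c \<longlonglongrightarrow> 1 / (real k + 1) * ((real k - 1) * \<alpha> ^ k)" .
    have "r < 1" "0 \<le> r" using k2 by (auto simp: r_def)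
    from contraction_limit[OF this(2,1) cl recx]
    have "(\<lambda>t. a t k) \<longlonglongrightarrow> 1 / (real k + 1) * ((real k - 1) * \<alpha> ^ k) / (1 - r)" .
    also have "1 / (real k + 1) * ((real k - 1) * \<alpha> ^ k) / (1 - r) = \<alpha> ^ k"
    proof -
      have k1: "real k - 1 > 0" "real k + 1 > 0" using k2 by auto
      have "1 - r = (real k - 1) / (real k + 1)" unfolding r_def using k1 by (simp add: field_simps)
      then show ?thesis using k1 by simp
    qed
    finally show ?thesis .
  qed
qed

theorem proposition11:
  fixes p :: "nat \<Rightarrow> nat \<Rightarrow> real"
  assumes "p 0 \<in> M1plus"
    and "\<forall>k. acoef (p 0) k < \<infinity>"
    and "\<forall>t. p (Suc t) = R1 (p t)"
  shows "\<forall>k. (\<lambda>t. acoef (p t) k) \<longlonglongrightarrow> (acoef (p 0) 1) ^ k"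
proof -
  have p0nn: "\<And>k. p 0 k \<ge> 0" and p0sum: "p 0 sums 1" using assms(1) by (auto simp: M1plus_def)
  have inv: "(\<forall>k. p t k \<ge> 0) \<and> (\<forall>k. acoef (p t) k < \<infinity>)" for t
  proof (induction t)
    case 0 then show ?case using p0nn assms(2) by auto
  next
    case (Suc t)
    then have nn: "\<And>k. p t k \<ge> 0" and fin: "\<And>k. acoef (p t) k < \<infinity>" by auto
    have "R1 (p t) k \<ge> 0" for k using R1_nonneg[OF nn] .
    moreover have "acoef (R1 (p t)) m < \<infinity>" for m
      using fin by (simp add: acoef_R1[OF nn fin] ennreal_mult_less_top less_top ennreal_mult_eq_top_iff)
    ultimately show ?case using assms(3) by simp
  qed
  have nn: "\<And>t k. p t k \<ge> 0" and fin: "\<And>t k. acoef (p t) k < \<infinity>" using inv by auto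
  define a where "a t k = enn2real (acoef (p t) k)" for t k
  have ann: "a t k \<ge> 0" for t k by (simp add: a_def)
  have aeq: "acoef (p t) k = ennreal (a t k)" for t k
    using fin[of t k] by (simp add: a_def less_top)
  have rec: "a (Suc t) m = 1 / (real m + 1) * (\<Sum>j\<le>m. a t j * a t (m - j))" for t m
  proof -
    have "ennreal (a (Suc t) m) = acoef (R1 (p t)) m" using aeq[of "Suc t" m] assms(3) by simp
    also have "\<dots> = ennreal (1 / (real m + 1)) * (\<Sum>j\<le>m. ennreal (a t j) * ennreal (a t (m - j)))"
      using acoef_R1[OF nn fin, of t m] by (simp add: aeq)
    also have "\<dots> = ennreal (1 / (real m + 1) * (\<Sum>j\<le>m. a t j * a t (m - j)))"
      using ann by (simp add: ennreal_mult[symmetric] sum_ennreal sum_nonneg)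
    finally show ?thesis using ann by (simp add: sum_nonneg)
  qed
  have a00: "a 0 0 = 1"
  proof -
    have "(p 0 has_sum 1) UNIV" using sums_nonneg_imp_has_sum[OF p0sum p0nn] .
    then have "infsum (p 0) UNIV = 1" by (rule infsumI)
    moreover have "ennreal (infsum (p 0) UNIV) = acoef (p 0) 0"
      using real_to_enn_infsum(2)[of UNIV "p 0"] p0nn fin[of 0 0] by (simp add: acoef0)
    ultimately show ?thesis by (simp add: a_def flip: \<open>ennreal (infsum (p 0) UNIV) = acoef (p 0) 0\<close>)
  qed
  have a0: "a t 0 = 1" for t
    by (induction t) (simp_all add: a00 rec)
  have a1: "a t 1 = a 0 1" for t
    by (induction t) (simp_all add: rec a0)
  show ?thesis
  proof
    fix k
    have "(\<lambda>t. a t k) \<longlonglongrightarrow> a 0 1 ^ k"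
      by (rule limit_rec[where a=a, OF rec a0 a1])
    then have "(\<lambda>t. ennreal (a t k)) \<longlonglongrightarrow> ennreal (a 0 1 ^ k)"
      by (rule tendsto_ennrealI)
    then show "(\<lambda>t. acoef (p t) k) \<longlonglongrightarrow> acoef (p 0) 1 ^ k"
      by (simp add: aeq ennreal_power ann)
  qed
qed

end
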